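(* Let $f=l+r\colon\mathbb{R}^d\to\mathbb{R}\cup\{+\infty\}$ be $\rho$-weakly convex and let $\{f_x=l_x+r\}_{x\in\mathbb{R}^d}$ be a one-sided model family with $\tau=0$ and Lipschitz constant $L$. Let $0<\mu<\rho^{-1}$, fix $a,b>0$, $x_0\in\mathbb{R}^d$, $\theta_k=\frac{\mu^{-1}-\rho}{2}(k+1)$, and define for $k=0,1,\dots,K$ $$x_{k+1}=\operatorname{argmin}_{x\in\mathbb{R}^d}\Big\{f_{x_k}(x)+\frac{1+\theta_k\mu}{2\mu}\Big\|x-\frac{x_0+\theta_k\mu x_k}{1+\theta_k\mu}\Big\|^2\Big\},\qquad \bar x_K=\frac{2}{(K+2)(K+3)-2}\sum_{k=1}^{K+1}(k+1)x_k.$$ If $K\ge\frac4a+\frac{16L^2}{(1-\mu\rho)^2b^2}$, then $$\|\bar x_K-\mathrm{prox}_{\mu f}(x_0)\|\le a\|x_0-\mathrm{prox}_{\mu f}(x_0)\|+\mu b.$$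
   Context: One-sided model family: $f=l+r$ with $r\colon\mathbb{R}^d\to\mathbb{R}\cup\{+\infty\}$ closed and $l\colon\mathbb{R}^d\to\mathbb{R}$ locally Lipschitz; for each $x\in\mathbb{R}^d$ a function $l_x\colon\mathbb{R}^d\to\mathbb{R}$ is given which is $L$-Lipschitz on $\mathrm{dom}\,r$, satisfies $l_x(x)=l(x)$ and $l_x(y)-l(y)\le\tau\|y-x\|^2$ for all $y$, and such that $f_x:=l_x+r$ is $\rho$-weakly convex (i.e. $f_x+\frac\rho2\|\cdot\|^2$ is convex). $\mathrm{prox}_{\mu f}(x)=\operatorname{argmin}_y\{f(y)+\frac1{2\mu}\|y-x\|^2\}$. *)

theory Defs
  imports "HOL-Analysis.Analysis" "HOL-Library.Extended_Real"
begin

text \<open>Extended-real-valued functions R^d -> R \<union> {+\<infinity>} are modelled as maps into ereal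
  that never take the value -\<infinity>.\<close>

definition ext_valued :: "('a \<Rightarrow> ereal) \<Rightarrow> bool" where
  "ext_valued g \<longleftrightarrow> (\<forall>x. g x \<noteq> -\<infinity>)"

definition edom :: "('a \<Rightarrow> ereal) \<Rightarrow> 'a set" where
  "edom g = {x. g x < \<infinity>}"

definition closed_fun :: "('a::topological_space \<Rightarrow> ereal) \<Rightarrow> bool" where
  "closed_fun g \<longleftrightarrow> closed {(x, t::real). g x \<le> ereal t}"

definition econvex :: "('a::real_vector \<Rightarrow> ereal) \<Rightarrow> bool" where
  "econvex g \<longleftrightarrow> (\<forall>x y. \<forall>t::real. 0 \<le> t \<and> t \<le> 1 \<longrightarrow>
      g (t *\<^sub>R x + (1 - t) *\<^sub>R y) \<le> ereal t * g x + ereal (1 - t) * g y)"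

definition weakly_convex :: "real \<Rightarrow> ('a::real_normed_vector \<Rightarrow> ereal) \<Rightarrow> bool" where
  "weakly_convex \<rho> g \<longleftrightarrow> econvex (\<lambda>x. g x + ereal (\<rho> / 2 * (norm x)\<^sup>2))"

definition locally_lipschitz :: "('a::metric_space \<Rightarrow> real) \<Rightarrow> bool" where
  "locally_lipschitz g \<longleftrightarrow> (\<forall>x. \<exists>e>0. \<exists>C. C-lipschitz_on (ball x e) g)"

definition one_sided_model_family ::
  "('a::real_normed_vector \<Rightarrow> real) \<Rightarrow> ('a \<Rightarrow> ereal) \<Rightarrow> ('a \<Rightarrow> 'a \<Rightarrow> real)
     \<Rightarrow> real \<Rightarrow> real \<Rightarrow> real \<Rightarrow> bool" where
  "one_sided_model_family l r lx L \<tau> \<rho> \<longleftrightarrow>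
     ext_valued r \<and> closed_fun r \<and> locally_lipschitz l \<and>
     (\<forall>x. L-lipschitz_on (edom r) (lx x)) \<and>
     (\<forall>x. lx x x = l x) \<and>
     (\<forall>x y. lx x y - l y \<le> \<tau> * (norm (y - x))\<^sup>2) \<and>
     (\<forall>x. weakly_convex \<rho> (\<lambda>y. ereal (lx x y) + r y))"

end

theory Submission
  imports Defs
begin

lemma norm_comb:
  fixes a b :: "'a::real_inner"
  shows "(norm (t *\<^sub>R a + (1-t) *\<^sub>R b))\<^sup>2 = t*(norm a)\<^sup>2 + (1-t)*(norm b)\<^sup>2 - t*(1-t)*(norm (a-b))\<^sup>2"
  by (simp add: power2_norm_eq_inner inner_add_left inner_add_right inner_diff_left inner_diff_right inner_commute algebra_simps)

lemma norm_sq_comb2: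
  fixes A B :: "'a::real_inner"
  shows "(norm (A + s *\<^sub>R B))\<^sup>2 = (1+s)*(norm A)\<^sup>2 + (s+s^2)*(norm B)\<^sup>2 - s*(norm (A-B))\<^sup>2"
  unfolding power2_norm_eq_inner
  by (simp add: inner_add_left inner_add_right inner_diff_left inner_diff_right inner_commute algebra_simps power2_eq_square)

lemma real_aux1:
  fixes \<mu> \<theta> P Q R :: real
  assumes "0 < \<mu>" "0 < 1 + \<theta>*\<mu>"
  shows "((1+\<theta>*\<mu>)*P + (\<theta>*\<mu>+(\<theta>*\<mu>)^2)*Q - \<theta>*\<mu>*R) / (2*\<mu>*(1+\<theta>*\<mu>))
       = P / (2*\<mu>) + \<theta>/2 * Q - \<theta>/(2*(1+\<theta>*\<mu>)) * R"
proof -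
  have a: "2*\<mu>*(1+\<theta>*\<mu>) \<noteq> 0" using assms by simp
  have b: "2*(1+\<theta>*\<mu>) \<noteq> 0" using assms by simp
  show ?thesis using assms a b by (simp add: field_simps power2_eq_square)
qed

lemma quad_id:
  fixes x0 x y :: "'a::real_inner"
  assumes "0 < \<mu>" "0 \<le> \<theta>"
  shows "(1 + \<theta>*\<mu>) / (2*\<mu>) * (norm (y - inverse (1 + \<theta>*\<mu>) *\<^sub>R (x0 + (\<theta>*\<mu>) *\<^sub>R x)))\<^sup>2
     = (norm (y - x0))\<^sup>2 / (2*\<mu>) + \<theta>/2 * (norm (y - x))\<^sup>2 - \<theta>/(2*(1+\<theta>*\<mu>)) * (norm (x - x0))\<^sup>2"
proof -
  define c where "c = 1 + \<theta>*\<mu>"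
  have c0: "c > 0" using assms by (simp add: c_def add_pos_nonneg)
  have v: "y - inverse c *\<^sub>R (x0 + (\<theta>*\<mu>) *\<^sub>R x) = inverse c *\<^sub>R ((y - x0) + (\<theta>*\<mu>) *\<^sub>R (y - x))"
  proof -
    have e: "(y - x0) + (\<theta>*\<mu>) *\<^sub>R (y - x) = c *\<^sub>R y - (x0 + (\<theta>*\<mu>) *\<^sub>R x)"
      by (simp add: c_def algebra_simps)
    show ?thesis unfolding e using c0 by (simp add: scaleR_right_diff_distrib)
  qed
  have n1: "(norm ((y - x0) + (\<theta>*\<mu>) *\<^sub>R (y - x)))\<^sup>2 = (1+\<theta>*\<mu>)*(norm (y-x0))\<^sup>2 + (\<theta>*\<mu>+(\<theta>*\<mu>)^2)*(norm (y-x))\<^sup>2 - \<theta>*\<mu>*(norm (x-x0))\<^sup>2"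
    using norm_sq_comb2[of "y-x0" "\<theta>*\<mu>" "y-x"] by (simp add: norm_minus_commute)
  have "c / (2*\<mu>) * (norm (y - inverse c *\<^sub>R (x0 + (\<theta>*\<mu>) *\<^sub>R x)))\<^sup>2
      = c/(2*\<mu>) * (inverse c)^2 * (norm ((y - x0) + (\<theta>*\<mu>) *\<^sub>R (y - x)))\<^sup>2"
    unfolding v using c0 by (simp add: power_mult_distrib)
  also have "\<dots> = ((1+\<theta>*\<mu>)*(norm (y-x0))\<^sup>2 + (\<theta>*\<mu>+(\<theta>*\<mu>)^2)*(norm (y-x))\<^sup>2 - \<theta>*\<mu>*(norm (x-x0))\<^sup>2) / (2*\<mu>*c)"
    unfolding n1 using c0 assms by (simp add: field_simps power2_eq_square)
  also have "\<dots> = (norm (y - x0))\<^sup>2 / (2*\<mu>) + \<theta>/2 * (norm (y - x))\<^sup>2 - \<theta>/(2*c) * (norm (x - x0))\<^sup>2"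
    using c0 assms real_aux1[of \<mu> \<theta> "(norm (y-x0))\<^sup>2" "(norm (y-x))\<^sup>2" "(norm (x-x0))\<^sup>2"] by (simp add: c_def)
  finally show ?thesis by (simp add: c_def)
qed

lemma lin_aux:
  fixes t Hu Hw Hy Qu Qy Nu Ny N \<beta> \<rho> :: real
  assumes I1: "Hw + \<rho>/2*(t*Ny+(1-t)*Nu - t*(1-t)*N) \<le> t*(Hy + \<rho>/2*Ny) + (1-t)*(Hu + \<rho>/2*Nu)"
    and I2: "Hu + \<beta>*Qu \<le> Hw + \<beta>*(t*Qy + (1-t)*Qu - t*(1-t)*N)"
    and t: "0 < t"
  shows "Hu + \<beta>*Qu \<le> Hy + \<beta>*Qy - (1-t)*(\<beta>-\<rho>/2)*N"
proof -
  have eq: "t*(Hy + \<beta>*Qy - (1-t)*(\<beta>-\<rho>/2)*N) - t*(Hu + \<beta>*Qu)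
     = ((t*(Hy + \<rho>/2*Ny) + (1-t)*(Hu + \<rho>/2*Nu)) - (Hw + \<rho>/2*(t*Ny+(1-t)*Nu - t*(1-t)*N)))
       + ((Hw + \<beta>*(t*Qy + (1-t)*Qu - t*(1-t)*N)) - (Hu + \<beta>*Qu))"
    by (simp add: field_simps)
  have "t*(Hu + \<beta>*Qu) \<le> t*(Hy + \<beta>*Qy - (1-t)*(\<beta>-\<rho>/2)*N)"
    using I1 I2 eq by linarith
  then show ?thesis using t by simp
qed

lemma limit_aux:
  fixes A B :: real
  assumes "\<And>t. 0 < t \<Longrightarrow> t < 1 \<Longrightarrow> A \<le> B - (1-t)*C" "0 \<le> C"
  shows "A \<le> B - C"
proof (rule ccontr)
  assume "\<not> A \<le> B - C"
  then have g: "A - (B - C) > 0" by simp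
  show False
  proof (cases "C = 0")
    case True
    then show ?thesis using assms(1)[of "1/2"] g by simp
  next
    case False
    then have C: "C > 0" using assms(2) by simp
    define t where "t = min (1/2) ((A - (B - C))/(2*C))"
    have t0: "0 < t" "t < 1" using g C by (auto simp: t_def)
    have "t*C \<le> (A - (B - C))/(2*C) * C" using C by (intro mult_right_mono) (auto simp: t_def)
    also have "\<dots> = (A - (B - C))/2" using C by simp
    finally have "t*C < A - (B - C)" using g by simp
    moreover have "A \<le> B - (1-t)*C" using assms(1) t0 by blast
    ultimately show False by (simp add: algebra_simps)
  qed
qed

lemma SC:
  fixes h :: "'a::real_inner \<Rightarrow> ereal"
  assumes wcv: "weakly_convex \<rho> h"
    and am: "is_arg_min (\<lambda>y. h y + ereal (\<beta> * (norm (y - z))\<^sup>2)) (\<lambda>_. True) u"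
    and hu: "h u = ereal Hu" and hy: "h y = ereal Hy"
    and nm: "\<And>x. h x \<noteq> -\<infinity>"
    and rb: "\<rho> \<le> 2*\<beta>"
  shows "Hu + \<beta>*(norm (u-z))\<^sup>2 + (\<beta> - \<rho>/2)*(norm (y-u))\<^sup>2 \<le> Hy + \<beta>*(norm (y-z))\<^sup>2"
proof -
  have key: "Hu + \<beta>*(norm (u-z))\<^sup>2 \<le> Hy + \<beta>*(norm (y-z))\<^sup>2 - (1-t)*((\<beta>-\<rho>/2)*(norm (y-u))\<^sup>2)"
    if t: "0 < t" "t < 1" for t
  proof -
    define w where "w = t *\<^sub>R y + (1-t) *\<^sub>R u"
    have cv: "h w + ereal (\<rho>/2*(norm w)\<^sup>2) \<le> ereal t * (h y + ereal (\<rho>/2*(norm y)\<^sup>2))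
               + ereal (1-t) * (h u + ereal (\<rho>/2*(norm u)\<^sup>2))"
      using wcv t unfolding weakly_convex_def econvex_def w_def by auto
    also have "\<dots> = ereal (t*(Hy + \<rho>/2*(norm y)\<^sup>2) + (1-t)*(Hu + \<rho>/2*(norm u)\<^sup>2))"
      by (simp add: hu hy)
    finally have cv2: "h w + ereal (\<rho>/2*(norm w)\<^sup>2) \<le> ereal (t*(Hy + \<rho>/2*(norm y)\<^sup>2) + (1-t)*(Hu + \<rho>/2*(norm u)\<^sup>2))" .
    then have "h w \<noteq> \<infinity>" by auto
    then obtain Hw where hw: "h w = ereal Hw" using nm[of w] by (cases "h w") auto
    have I1: "Hw + \<rho>/2*(norm w)\<^sup>2 \<le> t*(Hy + \<rho>/2*(norm y)\<^sup>2) + (1-t)*(Hu + \<rho>/2*(norm u)\<^sup>2)"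
      using cv2 hw by simp
    have "\<not> (h w + ereal (\<beta> * (norm (w - z))\<^sup>2) < h u + ereal (\<beta> * (norm (u - z))\<^sup>2))"
      using am unfolding is_arg_min_def by blast
    then have I2: "Hu + \<beta>*(norm (u-z))\<^sup>2 \<le> Hw + \<beta>*(norm (w-z))\<^sup>2"
      using hw hu by simp
    have n1: "(norm w)\<^sup>2 = t*(norm y)\<^sup>2 + (1-t)*(norm u)\<^sup>2 - t*(1-t)*(norm (y-u))\<^sup>2"
      unfolding w_def by (rule norm_comb)
    have wz: "w - z = t *\<^sub>R (y - z) + (1-t) *\<^sub>R (u - z)"
      unfolding w_def by (simp add: algebra_simps)
    have n2: "(norm (w-z))\<^sup>2 = t*(norm (y-z))\<^sup>2 + (1-t)*(norm (u-z))\<^sup>2 - t*(1-t)*(norm (y-u))\<^sup>2"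
      unfolding wz using norm_comb[of t "y-z" "u-z"] by simp
    have "Hu + \<beta>*(norm (u-z))\<^sup>2 \<le> Hy + \<beta>*(norm (y-z))\<^sup>2 - (1-t)*(\<beta>-\<rho>/2)*(norm (y-u))\<^sup>2"
      by (rule lin_aux[OF _ _ t(1), where Hw=Hw and Ny="(norm y)\<^sup>2" and Nu="(norm u)\<^sup>2"])
         (use I1 n1 I2 n2 in auto)
    then show ?thesis by (simp add: mult.assoc)
  qed
  have "Hu + \<beta>*(norm (u-z))\<^sup>2 \<le> Hy + \<beta>*(norm (y-z))\<^sup>2 - (\<beta>-\<rho>/2)*(norm (y-u))\<^sup>2"
    by (rule limit_aux[OF key]) (use rb in auto)
  then show ?thesis by simp
qed

lemma rec_aux:
  fixes \<alpha> n L D D' \<Delta> :: real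
  assumes a: "0 < \<alpha>" and n: "0 \<le> n"
    and h: "(2*\<alpha> + \<alpha>*(n+1)/2)/2 * D'\<^sup>2 \<le> (\<alpha>*(n+1)/2)/2 * D\<^sup>2 + 2*L*\<Delta> - (\<alpha>*(n+1)/2)/2*\<Delta>\<^sup>2"
  shows "(n+5) * D'\<^sup>2 \<le> (n+1) * D\<^sup>2 + 16*L\<^sup>2/\<alpha>\<^sup>2/(n+1)"
proof -
  define \<theta> where "\<theta> = \<alpha>*(n+1)/2"
  have th: "\<theta> > 0" using a n by (simp add: \<theta>_def)
  have y: "2*L*\<Delta> - \<theta>/2*\<Delta>\<^sup>2 \<le> 2*L\<^sup>2/\<theta>"
  proof -
    have "0 \<le> \<theta>/2 * (\<Delta> - 2*L/\<theta>)\<^sup>2" using th by simp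
    also have "\<dots> = \<theta>/2*\<Delta>\<^sup>2 - 2*L*\<Delta> + 2*L\<^sup>2/\<theta>"
      using th by (simp add: power2_eq_square field_simps)
    finally show ?thesis by simp
  qed
  have h2: "(2*\<alpha> + \<theta>)/2 * D'\<^sup>2 \<le> \<theta>/2 * D\<^sup>2 + 2*L\<^sup>2/\<theta>"
    using h y unfolding \<theta>_def by linarith
  have "(n+5) * D'\<^sup>2 = (4/\<alpha>) * ((2*\<alpha> + \<theta>)/2 * D'\<^sup>2)"
    using a by (simp add: \<theta>_def field_simps)
  also have "\<dots> \<le> (4/\<alpha>) * (\<theta>/2 * D\<^sup>2 + 2*L\<^sup>2/\<theta>)"
    using h2 a by (intro mult_left_mono) auto
  also have "\<dots> = (n+1) * D\<^sup>2 + 16*L\<^sup>2/\<alpha>\<^sup>2/(n+1)"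
  proof -
    have p1: "4/\<alpha>*(\<theta>/2*D\<^sup>2) = (n+1)*D\<^sup>2" using a by (simp add: \<theta>_def field_simps)
    have p2: "4/\<alpha>*(2*L\<^sup>2/\<theta>) = 16*L\<^sup>2/\<alpha>\<^sup>2/(n+1)"
    proof -
      have "n+1 \<noteq> 0" using n by simp
      then show ?thesis using a by (simp add: \<theta>_def field_simps power2_eq_square)
    qed
    show ?thesis using p1 p2 by (simp add: distrib_left)
  qed
  finally show ?thesis .
qed

lemma step0_aux:
  fixes \<alpha> L D D' :: real
  assumes a: "0 < \<alpha>"
    and h: "(2*\<alpha> + \<alpha>/2)/2 * D'\<^sup>2 \<le> (\<alpha>/2)/2 * D\<^sup>2 + 2*L*D'"
  shows "D'\<^sup>2 \<le> 8 * D\<^sup>2 / 24 + 16*L\<^sup>2/\<alpha>\<^sup>2 / (2*2)"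
proof -
  have y: "2*L*D' \<le> \<alpha>/2*D'\<^sup>2 + 2*L\<^sup>2/\<alpha>"
  proof -
    have "0 \<le> \<alpha>/2 * (D' - 2*L/\<alpha>)\<^sup>2" using a by simp
    also have "\<dots> = \<alpha>/2*D'\<^sup>2 - 2*L*D' + 2*L\<^sup>2/\<alpha>"
      using a by (simp add: power2_eq_square field_simps)
    finally show ?thesis by simp
  qed
  have e1: "(2*\<alpha> + \<alpha>/2)/2 * D'\<^sup>2 = 5/4*(\<alpha>*D'\<^sup>2)" by (simp add: field_simps)
  have e2: "(\<alpha>/2)/2 * D\<^sup>2 = 1/4*(\<alpha>*D\<^sup>2)" by (simp add: field_simps)
  have e3: "\<alpha>/2*D'\<^sup>2 = 1/2*(\<alpha>*D'\<^sup>2)" by simp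
  have h2': "3/4*(\<alpha>*D'\<^sup>2) \<le> 1/4*(\<alpha>*D\<^sup>2) + 2*L\<^sup>2/\<alpha>" using h y e1 e2 e3 by linarith
  have h2: "3*\<alpha>/4 * D'\<^sup>2 \<le> \<alpha>/4 * D\<^sup>2 + 2*L\<^sup>2/\<alpha>" using h2' by simp
  have "D'\<^sup>2 = (4/(3*\<alpha>)) * (3*\<alpha>/4 * D'\<^sup>2)" using a by simp
  also have "\<dots> \<le> (4/(3*\<alpha>)) * (\<alpha>/4 * D\<^sup>2 + 2*L\<^sup>2/\<alpha>)"
    using h2 a by (intro mult_left_mono) auto
  also have "\<dots> = D\<^sup>2/3 + 16*L\<^sup>2/\<alpha>\<^sup>2/6"
    using a by (simp add: field_simps power2_eq_square)
  also have "\<dots> \<le> 8 * D\<^sup>2 / 24 + 16*L\<^sup>2/\<alpha>\<^sup>2 / (2*2)"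
    by (simp add: divide_simps)
  finally show ?thesis .
qed

lemma ind_aux:
  fixes n X Y A E :: real
  assumes n: "1 \<le> n" and A: "0 \<le> A" and E: "0 \<le> E"
    and X: "X \<le> 8*A/((n+1)*(n+2)*(n+3)) + E/(2*(n+1))"
    and Y: "(n+5)*Y \<le> (n+1)*X + E/(n+1)"
  shows "Y \<le> 8*A/((n+1+1)*(n+1+2)*(n+1+3)) + E/(2*(n+1+1))"
proof -
  have "(n+5)*Y \<le> (n+1)*(8*A/((n+1)*(n+2)*(n+3)) + E/(2*(n+1))) + E/(n+1)"
  proof -
    have "(n+1)*X \<le> (n+1)*(8*A/((n+1)*(n+2)*(n+3)) + E/(2*(n+1)))"
      using X n by (intro mult_left_mono) auto
    then show ?thesis using Y by linarith
  qed
  also have "\<dots> = 8*A/((n+2)*(n+3)) + E*(n+3)/(2*(n+1))"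
  proof -
    have q1: "(n+1)*(8*A/((n+1)*(n+2)*(n+3))) = 8*A/((n+2)*(n+3))" using n by simp
    have q2': "m*(E/(2*m)) + E/m = E*(m+2)/(2*m)" if "m > 0" for m :: real
      using that by (simp add: field_simps)
    have q2: "(n+1)*(E/(2*(n+1))) + E/(n+1) = E*(n+3)/(2*(n+1))"
      using q2'[of "n+1"] n by (simp add: add.assoc)
    show ?thesis using q1 q2 by (simp add: distrib_left)
  qed
  also have "\<dots> \<le> (n+5)*(8*A/((n+1+1)*(n+1+2)*(n+1+3)) + E/(2*(n+1+1)))"
  proof -
    have a1': "8*A/(m*(m+1)) \<le> (m+3)*(8*A/(m*(m+1)*(m+2)))" if "m > 0" for m :: real
    proof -
      have nz: "m \<noteq> 0" "m+1 \<noteq> 0" "m+2 \<noteq> 0" using that by auto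
      have e: "(m+3)*(8*A/(m*(m+1)*(m+2))) = 8*A/(m*(m+1)) + 8*A/(m*(m+1)*(m+2))"
        using that by (simp add: divide_simps) (simp add: algebra_simps)
      have "0 \<le> 8*A/(m*(m+1)*(m+2))" using that A by simp
      then show ?thesis using e by simp
    qed
    have a1: "8*A/((n+2)*(n+3)) \<le> (n+5)*(8*A/((n+2)*(n+3)*(n+4)))"
      using a1'[of "n+2"] n by (simp add: add.assoc)
    have a2: "E*(n+3)/(2*(n+1)) \<le> (n+5)*(E/(2*(n+2)))"
    proof -
      have "(n+3)*(n+2) \<le> (n+5)*(n+1)" using n by (simp add: algebra_simps)
      then have "E*((n+3)*(n+2)) \<le> E*((n+5)*(n+1))" using E by (rule mult_left_mono)
      then show ?thesis using n by (simp add: field_simps)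
    qed
    show ?thesis using a1 a2 by (simp add: algebra_simps add_mono)
  qed
  finally have "(n+5)*Y \<le> (n+5)*(8*A/((n+1+1)*(n+1+2)*(n+1+3)) + E/(2*(n+1+1)))" .
  then show ?thesis using n by simp
qed

lemma sum_frac: "(\<Sum>j=1..n. 1/((real j+2)*(real j+3))) = 1/3 - 1/(real n+3)"
proof (induction n)
  case 0
  then show ?case by simp
next
  case (Suc n)
  have "(\<Sum>j=1..Suc n. 1/((real j+2)*(real j+3))) = (\<Sum>j=1..n. 1/((real j+2)*(real j+3))) + 1/((real n+3)*(real n+4))"
    by (simp add: add.commute)
  also have "\<dots> = 1/3 - 1/(real n+3) + 1/((real n+3)*(real n+4))" using Suc by simp
  also have "\<dots> = 1/3 - 1/(real (Suc n)+3)"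
  proof -
    have g: "1/3 - 1/m + 1/(m*(m+1)) = 1/3 - 1/(m+1)" if "m > 0" for m :: real
    proof -
      show ?thesis using that by (simp add: divide_simps) (simp add: algebra_simps)
    qed
    show ?thesis using g[of "real n + 3"] by (simp add: add.assoc)
  qed
  finally show ?case .
qed

lemma sum_w: "(\<Sum>k=1..K+1. (real k + 1)) = ((real K + 2) * (real K + 3) - 2)/2"
  by (induction K) (auto simp: field_simps)

lemma final_num:
  fixes K D0 E a m :: real
  assumes K: "K \<ge> 4/a + E/m\<^sup>2" and a: "0 < a" and m: "0 < m" and E: "0 \<le> E" and D0: "0 \<le> D0"
  shows "(8/3*D0\<^sup>2 + (K+1)*E/2) / (((K+2)*(K+3)-2)/2) \<le> (a*D0 + m)\<^sup>2"
proof -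
  have Em: "E/m\<^sup>2 \<ge> 0" using E by simp
  have a4: "4/a > 0" using a by simp
  have K1: "K \<ge> 4/a" using K Em by linarith
  have Kp: "K > 0" using K1 a4 by linarith
  have "E/m\<^sup>2 \<le> K" using K a4 by linarith
  then have K2: "E \<le> K*m\<^sup>2" using m by (simp add: divide_le_eq)
  have aK: "4 \<le> a*K" using K1 a by (simp add: divide_le_eq mult.commute)
  have S: "((K+2)*(K+3)-2)/2 = (K+1)*(K+4)/2" by (simp add: algebra_simps)
  have Sp: "(K+1)*(K+4) > 0" using Kp by simp
  have p1: "8/3*D0\<^sup>2 / ((K+1)*(K+4)/2) \<le> a\<^sup>2*D0\<^sup>2"
  proof -
    have "(4::real)\<^sup>2 \<le> (a*K)\<^sup>2" using aK by (intro power_mono) auto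
    also have "\<dots> \<le> a\<^sup>2*((K+1)*(K+4))" using Kp by (simp add: power2_eq_square algebra_simps)
    finally have "16/3 \<le> a\<^sup>2*((K+1)*(K+4))" by simp
    then have "16/3*D0\<^sup>2 \<le> a\<^sup>2*((K+1)*(K+4))*D0\<^sup>2" by (rule mult_right_mono) simp
    then show ?thesis using Sp by (simp add: divide_simps) (simp add: algebra_simps)
  qed
  have p2: "(K+1)*E/2 / ((K+1)*(K+4)/2) \<le> m\<^sup>2"
  proof -
    have "(K+1)*E/2 / ((K+1)*(K+4)/2) = E/(K+4)" using Kp by (simp add: divide_simps)
    also have "\<dots> \<le> E/K" using Kp E by (simp add: frac_le)
    also have "\<dots> \<le> m\<^sup>2" using K2 Kp by (simp add: divide_le_eq mult.commute)
    finally show ?thesis .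
  qed
  have "(8/3*D0\<^sup>2 + (K+1)*E/2) / (((K+2)*(K+3)-2)/2) = 8/3*D0\<^sup>2 / ((K+1)*(K+4)/2) + (K+1)*E/2 / ((K+1)*(K+4)/2)"
    unfolding S by (simp add: add_divide_distrib)
  also have "\<dots> \<le> a\<^sup>2*D0\<^sup>2 + m\<^sup>2" using p1 p2 by simp
  also have "\<dots> \<le> (a*D0 + m)\<^sup>2" using a m D0 by (simp add: power2_eq_square algebra_simps)
  finally show ?thesis .
qed
lemma argmin_dom:
  fixes r :: "'a \<Rightarrow> ereal"
  assumes am: "is_arg_min (\<lambda>y. ereal (g y) + r y + ereal (q y)) (\<lambda>_. True) u"
    and y0: "r y0 < \<infinity>"
  shows "r u < \<infinity>"
proof (rule ccontr)
  assume "\<not> r u < \<infinity>"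
  then have "r u = \<infinity>" by simp
  then have fu: "ereal (g u) + r u + ereal (q u) = \<infinity>" by simp
  have "ereal (g y0) + r y0 + ereal (q y0) < \<infinity>" using y0 by (cases "r y0") auto
  then have "ereal (g y0) + r y0 + ereal (q y0) < ereal (g u) + r u + ereal (q u)" using fu by simp
  then show False using am unfolding is_arg_min_def by blast
qed

theorem mainTheorem8:
  fixes l :: "'a::euclidean_space \<Rightarrow> real" and r :: "'a \<Rightarrow> ereal"
    and lx :: "'a \<Rightarrow> 'a \<Rightarrow> real"
    and L \<rho> \<mu> a b :: real and x0 p :: 'a and xs :: "nat \<Rightarrow> 'a" and K :: nat
  assumes proper: "edom r \<noteq> {}"
    and wc: "weakly_convex \<rho> (\<lambda>y. ereal (l y) + r y)"
    and model: "one_sided_model_family l r lx L 0 \<rho>"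
    and rho: "0 < \<rho>" and mu: "0 < \<mu>" "\<mu> < inverse \<rho>"
    and ab: "0 < a" "0 < b"
    and x_0: "xs 0 = x0"
    and iter: "\<And>k. k \<le> K \<Longrightarrow>
       is_arg_min
         (\<lambda>y. ereal (lx (xs k) y) + r y
               + ereal ((1 + (((inverse \<mu> - \<rho>) / 2) * (real k + 1)) * \<mu>) / (2 * \<mu>)
                  * (norm (y - inverse (1 + (((inverse \<mu> - \<rho>) / 2) * (real k + 1)) * \<mu>)
                      *\<^sub>R (x0 + ((((inverse \<mu> - \<rho>) / 2) * (real k + 1)) * \<mu>) *\<^sub>R xs k)))\<^sup>2))
         (\<lambda>_. True) (xs (Suc k))"
    and prox: "is_arg_min (\<lambda>y. ereal (l y) + r y + ereal (1 / (2 * \<mu>) * (norm (y - x0))\<^sup>2))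
                 (\<lambda>_. True) p"
    and K: "real K \<ge> 4 / a + 16 * L\<^sup>2 / ((1 - \<mu> * \<rho>)\<^sup>2 * b\<^sup>2)"
  shows "norm ((2 / ((real K + 2) * (real K + 3) - 2)) *\<^sub>R (\<Sum>k = 1..K+1. (real k + 1) *\<^sub>R xs k) - p)
           \<le> a * norm (x0 - p) + \<mu> * b"
proof -
  have ext: "\<And>x. r x \<noteq> -\<infinity>" and lipm: "\<And>x. L-lipschitz_on (edom r) (lx x)"
    and tight: "\<And>x. lx x x = l x" and below: "\<And>x y. lx x y - l y \<le> 0 * (norm (y - x))\<^sup>2"
    and wcm: "\<And>x. weakly_convex \<rho> (\<lambda>y. ereal (lx x y) + r y)"
    using model unfolding one_sided_model_family_def ext_valued_def by auto
  have below': "\<And>x y. lx x y \<le> l y" using below by simp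
  have Lnn: "0 \<le> L" using lipm lipschitz_on_nonneg by blast
  have lipd: "lx x c - lx x d \<le> L * norm (c - d)" if "c \<in> edom r" "d \<in> edom r" for x c d
  proof -
    have "norm (lx x c - lx x d) \<le> L * norm (c - d)" by (rule lipschitz_on_normD[OF lipm that])
    then show ?thesis by simp
  qed
  have lipl: "l c - l d \<le> L * norm (c - d)" if "c \<in> edom r" "d \<in> edom r" for c d
    using lipd[OF that, of c] tight[of c] below'[of c d] by linarith
  define \<alpha> where "\<alpha> = inverse \<mu> - \<rho>"
  have mr: "\<mu>*\<rho> < 1" using mu rho by (simp add: field_simps)
  have \<alpha>: "\<alpha> > 0" using mr mu unfolding \<alpha>_def by (simp add: field_simps)
  have \<alpha>\<mu>: "\<mu> * \<alpha> = 1 - \<mu>*\<rho>" using mu unfolding \<alpha>_def by (simp add: field_simps)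
  obtain y0 where y0: "r y0 < \<infinity>" using proper unfolding edom_def by auto
  have domp: "p \<in> edom r" using argmin_dom[OF prox y0] unfolding edom_def by simp
  have domx: "xs (Suc k) \<in> edom r" if "k \<le> K" for k
    using argmin_dom[OF iter[OF that] y0] unfolding edom_def by simp
  define R where "R y = real_of_ereal (r y)" for y
  have rR: "r y = ereal (R y)" if "y \<in> edom r" for y
    using that ext[of y] unfolding R_def edom_def by (cases "r y") auto
  define D where "D j = norm (xs j - p)" for j
  define E where "E = 16*L\<^sup>2/\<alpha>\<^sup>2"
  define q where "q y = (norm (y - x0))\<^sup>2 / (2*\<mu>)" for y
  have S2: "l p + R p + q p + \<alpha>/2 * (norm (y-p))\<^sup>2 \<le> l y + R y + q y" if yd: "y \<in> edom r" for y
  proof -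
    have "l p + R p + 1/(2*\<mu>)*(norm (p-x0))\<^sup>2 + (1/(2*\<mu>) - \<rho>/2)*(norm (y-p))\<^sup>2
          \<le> l y + R y + 1/(2*\<mu>)*(norm (y-x0))\<^sup>2"
    proof (rule SC[OF wc prox])
      show "ereal (l p) + r p = ereal (l p + R p)" using rR[OF domp] by simp
      show "ereal (l y) + r y = ereal (l y + R y)" using rR[OF yd] by simp
      show "ereal (l x) + r x \<noteq> -\<infinity>" for x using ext[of x] by (cases "r x") auto
      show "\<rho> \<le> 2 * (1 / (2 * \<mu>))" using \<alpha> mu unfolding \<alpha>_def by (simp add: field_simps)
    qed
    moreover have "1/(2*\<mu>) - \<rho>/2 = \<alpha>/2" unfolding \<alpha>_def using mu by (simp add: field_simps)
    ultimately show ?thesis unfolding q_def by simp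
  qed
  define th where "th k = ((inverse \<mu> - \<rho>) / 2) * (real k + 1)" for k :: nat
  have th_eq: "th k = \<alpha>*(real k + 1)/2" for k unfolding th_def \<alpha>_def by simp
  have th_pos: "th k > 0" for k using \<alpha> unfolding th_eq by simp
  have S1: "lx (xs k) (xs (Suc k)) + R (xs (Suc k)) + q (xs (Suc k)) + th k/2 * (norm (xs (Suc k) - xs k))\<^sup>2
            + (\<alpha> + th k)/2 * (D (Suc k))\<^sup>2
          \<le> lx (xs k) p + R p + q p + th k/2 * (norm (p - xs k))\<^sup>2" if kK: "k \<le> K" for k
  proof -
    let ?\<beta> = "(1 + th k * \<mu>) / (2 * \<mu>)"
    let ?z = "inverse (1 + th k * \<mu>) *\<^sub>R (x0 + (th k * \<mu>) *\<^sub>R xs k)"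
    have it: "is_arg_min (\<lambda>y. ereal (lx (xs k) y) + r y + ereal (?\<beta> * (norm (y - ?z))\<^sup>2)) (\<lambda>_. True) (xs (Suc k))"
      using iter[OF kK] unfolding th_def .
    have xd: "xs (Suc k) \<in> edom r" using domx[OF kK] .
    have "lx (xs k) (xs (Suc k)) + R (xs (Suc k)) + ?\<beta> * (norm (xs (Suc k) - ?z))\<^sup>2
           + (?\<beta> - \<rho>/2) * (norm (p - xs (Suc k)))\<^sup>2
          \<le> lx (xs k) p + R p + ?\<beta> * (norm (p - ?z))\<^sup>2"
    proof (rule SC[OF wcm it])
      show "ereal (lx (xs k) (xs (Suc k))) + r (xs (Suc k)) = ereal (lx (xs k) (xs (Suc k)) + R (xs (Suc k)))"
        using rR[OF xd] by simp
      show "ereal (lx (xs k) p) + r p = ereal (lx (xs k) p + R p)" using rR[OF domp] by simp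
      show "ereal (lx (xs k) x) + r x \<noteq> -\<infinity>" for x using ext[of x] by (cases "r x") auto
      have "0 < \<mu> * th k" using mu th_pos[of k] by simp
      then show "\<rho> \<le> 2 * ?\<beta>" using mr mu by (simp add: field_simps)
    qed
    moreover have "?\<beta> * (norm (y - ?z))\<^sup>2 = q y + th k/2 * (norm (y - xs k))\<^sup>2 - th k/(2*(1+th k*\<mu>)) * (norm (xs k - x0))\<^sup>2" for y
      unfolding q_def using quad_id[of \<mu> "th k" y x0 "xs k"] mu th_pos[of k] by simp
    moreover have "?\<beta> - \<rho>/2 = (\<alpha> + th k)/2" unfolding \<alpha>_def using mu by (simp add: field_simps)
    ultimately show ?thesis unfolding D_def by (simp add: norm_minus_commute)
  qed
  have rec: "(real k + 5) * (D (Suc k))\<^sup>2 \<le> (real k + 1) * (D k)\<^sup>2 + E / (real k + 1)"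
    if k1: "1 \<le> k" and kK: "k \<le> K" for k
  proof -
    have xkd: "xs k \<in> edom r" using domx[of "k - 1"] k1 kK by simp
    have xd: "xs (Suc k) \<in> edom r" using domx[OF kK] .
    have a1: "lx (xs k) (xs k) - lx (xs k) (xs (Suc k)) \<le> L * norm (xs (Suc k) - xs k)"
      using lipd[OF xkd xd, of "xs k"] by (simp add: norm_minus_commute)
    have a2: "l (xs (Suc k)) - l (xs k) \<le> L * norm (xs (Suc k) - xs k)" using lipl[OF xd xkd] .
    have a3: "lx (xs k) p \<le> l p" by (rule below')
    have h: "(2*\<alpha> + \<alpha>*(real k+1)/2)/2 * (D (Suc k))\<^sup>2 \<le> (\<alpha>*(real k+1)/2)/2 * (D k)\<^sup>2
             + 2*L*norm (xs (Suc k) - xs k) - (\<alpha>*(real k+1)/2)/2*(norm (xs (Suc k) - xs k))\<^sup>2"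
    proof -
      have "(2*\<alpha> + th k)/2 * (D (Suc k))\<^sup>2 \<le> th k/2 * (D k)\<^sup>2
             + 2*L*norm (xs (Suc k) - xs k) - th k/2*(norm (xs (Suc k) - xs k))\<^sup>2"
      proof -
        have e1: "(2*\<alpha> + th k)/2 * (D (Suc k))\<^sup>2 = (\<alpha> + th k)/2 * (D (Suc k))\<^sup>2 + \<alpha>/2 * (D (Suc k))\<^sup>2"
          by (simp add: field_simps)
        have s2: "l p + R p + q p + \<alpha>/2 * (D (Suc k))\<^sup>2 \<le> l (xs (Suc k)) + R (xs (Suc k)) + q (xs (Suc k))"
          using S2[OF xd] unfolding D_def by simp
        show ?thesis using S1[OF kK] s2 e1 a1 a2 a3 tight[of "xs k"] unfolding D_def
          by (simp add: norm_minus_commute)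
      qed
      then show ?thesis unfolding th_eq .
    qed
    show ?thesis using rec_aux[OF \<alpha> _ h] unfolding E_def by simp
  qed

  have D0: "D 0 = norm (x0 - p)" unfolding D_def using x_0 by simp
  have step0: "(D 1)\<^sup>2 \<le> 8 * (D 0)\<^sup>2 / 24 + E / (2*2)"
  proof -
    have xd: "xs (Suc 0) \<in> edom r" using domx[of 0] by simp
    have a1: "lx x0 p - lx x0 (xs (Suc 0)) \<le> L * D (Suc 0)"
      using lipd[OF domp xd, of x0] unfolding D_def by (simp add: norm_minus_commute)
    have a2: "l (xs (Suc 0)) - l p \<le> L * D (Suc 0)" using lipl[OF xd domp] unfolding D_def .
    have s2: "l p + R p + q p + \<alpha>/2 * (D (Suc 0))\<^sup>2 \<le> l (xs (Suc 0)) + R (xs (Suc 0)) + q (xs (Suc 0))"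
      using S2[OF xd] unfolding D_def by simp
    have s1: "lx x0 (xs (Suc 0)) + R (xs (Suc 0)) + q (xs (Suc 0)) + th 0/2 * (norm (xs (Suc 0) - x0))\<^sup>2
            + (\<alpha> + th 0)/2 * (D (Suc 0))\<^sup>2
          \<le> lx x0 p + R p + q p + th 0/2 * (D 0)\<^sup>2"
      using S1[of 0] x_0 unfolding D_def by (simp add: norm_minus_commute)
    have nn: "0 \<le> th 0/2 * (norm (xs (Suc 0) - x0))\<^sup>2" using th_pos[of 0] by simp
    have th0: "th 0 = \<alpha>/2" unfolding th_eq by simp
    have e1: "(2*\<alpha> + \<alpha>/2)/2 * (D (Suc 0))\<^sup>2 = (\<alpha> + th 0)/2 * (D (Suc 0))\<^sup>2 + \<alpha>/2 * (D (Suc 0))\<^sup>2"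
      unfolding th0 by (simp add: field_simps)
    have e2: "(\<alpha>/2)/2 * (D 0)\<^sup>2 = th 0/2 * (D 0)\<^sup>2" unfolding th0 by simp
    have h: "(2*\<alpha> + \<alpha>/2)/2 * (D (Suc 0))\<^sup>2 \<le> (\<alpha>/2)/2 * (D 0)\<^sup>2 + 2*L*D (Suc 0)"
      using s1 s2 a1 a2 nn e1 e2 by linarith
    show ?thesis using step0_aux[OF \<alpha> h] unfolding E_def by simp
  qed
  have bound: "(D j)\<^sup>2 \<le> 8 * (D 0)\<^sup>2 / ((real j+1)*(real j+2)*(real j+3)) + E / (2*(real j+1))"
    if "1 \<le> j" "j \<le> K+1" for j
    using that
  proof (induction j)
    case 0
    then show ?case by simp
  next
    case (Suc j)
    show ?case
    proof (cases "j = 0")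
      case True
      then show ?thesis using step0 by simp
    next
      case False
      then have j1: "1 \<le> j" and jK: "j \<le> K" using Suc.prems by auto
      have IH: "(D j)\<^sup>2 \<le> 8 * (D 0)\<^sup>2 / ((real j+1)*(real j+2)*(real j+3)) + E / (2*(real j+1))"
        using Suc.IH j1 jK by simp
      have "(D (Suc j))\<^sup>2 \<le> 8 * (D 0)\<^sup>2 / ((real j+1+1)*(real j+1+2)*(real j+1+3)) + E / (2*(real j+1+1))"
        by (rule ind_aux[OF _ _ _ IH rec[OF j1 jK]]) (use j1 in \<open>auto simp: E_def\<close>)
      then show ?thesis by (simp add: add.assoc add.commute)
    qed
  qed
  define w where "w j = real j + 1" for j :: nat
  define I where "I = {1..K+1}"
  have wpos: "w j > 0" for j unfolding w_def by simp
  have sumD2: "(\<Sum>j\<in>I. w j * (D j)\<^sup>2) \<le> 8/3 * (D 0)\<^sup>2 + (real K + 1) * E / 2"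
  proof -
    have "(\<Sum>j\<in>I. w j * (D j)\<^sup>2) \<le> (\<Sum>j\<in>I. 8 * (D 0)\<^sup>2 * (1/((real j+2)*(real j+3))) + E/2)"
    proof (rule sum_mono)
      fix j assume "j \<in> I"
      then have j: "1 \<le> j" "j \<le> K+1" unfolding I_def by auto
      have "w j * (D j)\<^sup>2 \<le> w j * (8 * (D 0)\<^sup>2 / ((real j+1)*(real j+2)*(real j+3)) + E / (2*(real j+1)))"
        using bound[OF j] wpos[of j] by (intro mult_left_mono) auto
      also have "\<dots> = 8 * (D 0)\<^sup>2 * (1/((real j+2)*(real j+3))) + E/2"
        unfolding w_def by (simp add: divide_simps) (simp add: algebra_simps)
      finally show "w j * (D j)\<^sup>2 \<le> 8 * (D 0)\<^sup>2 * (1/((real j+2)*(real j+3))) + E/2" .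
    qed
    also have "\<dots> = 8 * (D 0)\<^sup>2 * (1/3 - 1/(real (K+1)+3)) + (real K + 1) * E / 2"
    proof -
      have "(\<Sum>j\<in>I. 8 * (D 0)\<^sup>2 * (1/((real j+2)*(real j+3))) + E/2)
          = 8 * (D 0)\<^sup>2 * (\<Sum>j\<in>I. 1/((real j+2)*(real j+3))) + (\<Sum>j\<in>I. E/2)"
        by (simp only: sum.distrib sum_distrib_left)
      moreover have "(\<Sum>j\<in>I. 1/((real j+2)*(real j+3))) = 1/3 - 1/(real (K+1)+3)"
        unfolding I_def by (rule sum_frac)
      moreover have "(\<Sum>j\<in>I. E/2) = (real K + 1) * E / 2" unfolding I_def by simp
      ultimately show ?thesis by simp
    qed
    also have "\<dots> \<le> 8/3 * (D 0)\<^sup>2 + (real K + 1) * E / 2"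
      by (simp add: algebra_simps)
    finally show ?thesis .
  qed
  define S where "S = ((real K + 2) * (real K + 3) - 2)/2"
  have Sw: "(\<Sum>j\<in>I. w j) = S" unfolding I_def w_def S_def by (rule sum_w)
  have Spos: "S > 0" unfolding S_def by (simp add: algebra_simps add_pos_nonneg)
  have xbar: "(2 / ((real K + 2) * (real K + 3) - 2)) *\<^sub>R (\<Sum>k = 1..K+1. (real k + 1) *\<^sub>R xs k) - p
        = (1/S) *\<^sub>R (\<Sum>j\<in>I. w j *\<^sub>R (xs j - p))"
  proof -
    have "(\<Sum>j\<in>I. w j *\<^sub>R (xs j - p)) = (\<Sum>j\<in>I. w j *\<^sub>R xs j) - S *\<^sub>R p"
      using Sw by (simp add: scaleR_right_diff_distrib sum_subtractf scaleR_sum_left[symmetric])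
    then have "(1/S) *\<^sub>R (\<Sum>j\<in>I. w j *\<^sub>R (xs j - p)) = (1/S) *\<^sub>R (\<Sum>j\<in>I. w j *\<^sub>R xs j) - p"
      using Spos by (simp add: scaleR_right_diff_distrib)
    moreover have "2 / ((real K + 2) * (real K + 3) - 2) = 1/S" unfolding S_def by simp
    ultimately show ?thesis unfolding I_def w_def by simp
  qed
  define T where "T = (\<Sum>j\<in>I. w j * D j)"
  have nb: "norm ((1/S) *\<^sub>R (\<Sum>j\<in>I. w j *\<^sub>R (xs j - p))) \<le> T / S"
  proof -
    have "norm (\<Sum>j\<in>I. w j *\<^sub>R (xs j - p)) \<le> (\<Sum>j\<in>I. norm (w j *\<^sub>R (xs j - p)))"
      by (rule norm_sum)
    also have "\<dots> = T" unfolding T_def D_def using wpos by (simp add: abs_of_pos)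
    finally have "norm (\<Sum>j\<in>I. w j *\<^sub>R (xs j - p)) \<le> T" .
    then show ?thesis using Spos by (simp add: divide_simps)
  qed
  have Tnn: "0 \<le> T" unfolding T_def D_def using wpos by (simp add: sum_nonneg less_imp_le)
  have CS: "T\<^sup>2 \<le> (\<Sum>j\<in>I. w j * (D j)\<^sup>2) * S"
  proof -
    have "T\<^sup>2 = (\<Sum>j\<in>I. (sqrt (w j) * D j) * sqrt (w j))\<^sup>2"
      unfolding T_def using wpos by (simp add: less_imp_le mult.commute mult.left_commute)
    also have "\<dots> \<le> (\<Sum>j\<in>I. (sqrt (w j) * D j)\<^sup>2) * (\<Sum>j\<in>I. (sqrt (w j))\<^sup>2)"
      by (rule Cauchy_Schwarz_ineq_sum)
    also have "\<dots> = (\<Sum>j\<in>I. w j * (D j)\<^sup>2) * S"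
      using wpos Sw by (simp add: power_mult_distrib less_imp_le)
    finally show ?thesis .
  qed
  have "(T/S)\<^sup>2 \<le> (8/3 * (D 0)\<^sup>2 + (real K + 1) * E / 2) / S"
  proof -
    have "(T/S)\<^sup>2 = T\<^sup>2 / (S * S)" by (simp add: power2_eq_square)
    also have "\<dots> \<le> (\<Sum>j\<in>I. w j * (D j)\<^sup>2) / S"
    proof -
      have "(\<Sum>j\<in>I. w j * (D j)\<^sup>2) / S * (S * S) = (\<Sum>j\<in>I. w j * (D j)\<^sup>2) * S"
        using Spos by (simp add: field_simps)
      then show ?thesis using CS Spos by (simp add: pos_divide_le_eq)
    qed
    also have "\<dots> \<le> (8/3 * (D 0)\<^sup>2 + (real K + 1) * E / 2) / S"
      using sumD2 Spos by (simp add: divide_right_mono)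
    finally show ?thesis .
  qed
  also have "\<dots> \<le> (a * D 0 + \<mu> * b)\<^sup>2"
    unfolding S_def
  proof (rule final_num)
    have "16 * L\<^sup>2 / ((1 - \<mu> * \<rho>)\<^sup>2 * b\<^sup>2) = E / (\<mu> * b)\<^sup>2"
      unfolding E_def \<alpha>\<mu>[symmetric] by (simp add: power_mult_distrib field_simps)
    then show "real K \<ge> 4 / a + E / (\<mu> * b)\<^sup>2" using K by simp
    show "0 < a" by (rule ab(1))
    show "0 < \<mu> * b" using mu ab by simp
    show "0 \<le> E" unfolding E_def by simp
    show "0 \<le> D 0" unfolding D_def by simp
  qed
  finally have sq: "(T/S)\<^sup>2 \<le> (a * D 0 + \<mu> * b)\<^sup>2" .
  have "T/S \<le> a * D 0 + \<mu> * b"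
    by (rule power2_le_imp_le[OF sq]) (use ab mu in \<open>simp add: D_def\<close>)
  then show ?thesis using nb xbar D0 by simp
qed


end
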